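(* Let $X,Y\in L^\infty$ and $k,b\in\mathbb{K}$. Then (a) $\mathbb{E}[kX+b]=k\,\mathbb{E}[X]+b$; (b) $\mathbb{E}[X+Y]\subseteq \mathbb{E}[X]+\mathbb{E}[Y]=\{a+c: a\in\mathbb{E}[X],\,c\in\mathbb{E}[Y]\}$, with equality when $X$ and $Y$ are independent; (c) if $X$ and $Y$ are independent, then $\mathbb{E}[XY]=\mathbb{E}[X]\,\mathbb{E}[Y]=\{ac: a\in\mathbb{E}[X],\,c\in\mathbb{E}[Y]\}$.
   Context: $\mathbb{K}$ is a local field with non-archimedean absolute value $|\cdot|$ satisfying $|x|=0 \iff x=0$, $|xy|=|x||y|$ and $|x+y|\le |x|\vee|y|$. $(\Omega,\mathcal{F},\mathbb{P})$ is a probability space; random variables equal a.s. are identified. $L^\infty$ is the space of $\mathbb{K}$-valued random variables $X$ with $\|X\|_\infty:=\operatorname{ess\,sup}|X|<\infty$. For $X\in L^\infty$, $\varepsilon(X):=\inf\{\|X-c\|_\infty : c\in\mathbb{K}\}$ and $\mathbb{E}[X]:=\{c\in\mathbb{K} : \|X-c\|_\infty=\varepsilon(X)\}$. *)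

theory Defs
  imports "HOL-Probability.Probability"
begin

definition nonarch_abs :: "('k::field \<Rightarrow> real) \<Rightarrow> bool" where
  "nonarch_abs av \<longleftrightarrow>
     (\<forall>x. 0 \<le> av x) \<and> (\<forall>x. av x = 0 \<longleftrightarrow> x = 0) \<and>
     (\<forall>x y. av (x * y) = av x * av y) \<and>
     (\<forall>x y. av (x + y) \<le> max (av x) (av y))"

text \<open>Non-archimedean local field: the metric d(x,y) = av(x - y) is non-discrete
  (av non-trivial), complete, and the closed unit ball is totally bounded
  (hence compact, so the field is locally compact).\<close>
definition nonarch_local_field :: "('k::field \<Rightarrow> real) \<Rightarrow> bool" where
  "nonarch_local_field av \<longleftrightarrow>
     nonarch_abs av \<and>
     (\<exists>x. av x \<noteq> 0 \<and> av x \<noteq> 1) \<and>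
     (\<forall>s::nat \<Rightarrow> 'k. (\<forall>e>0. \<exists>N. \<forall>m\<ge>N. \<forall>n\<ge>N. av (s m - s n) < e) \<longrightarrow>
        (\<exists>l. \<forall>e>0. \<exists>N. \<forall>n\<ge>N. av (s n - l) < e)) \<and>
     (\<forall>e>0. \<exists>F. finite F \<and> {x. av x \<le> 1} \<subseteq> (\<Union>c\<in>F. {x. av (x - c) < e}))"

text \<open>Borel sigma-algebra of the metric topology (generated by open balls).\<close>
definition Kborel :: "('k::field \<Rightarrow> real) \<Rightarrow> 'k measure" where
  "Kborel av = sigma UNIV (range (\<lambda>(c, r). {x. av (x - c) < r}))"

definition norm_inf :: "'a measure \<Rightarrow> ('k::field \<Rightarrow> real) \<Rightarrow> ('a \<Rightarrow> 'k) \<Rightarrow> ereal" where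
  "norm_inf M av X = esssup M (\<lambda>\<omega>. ereal (av (X \<omega>)))"

definition Linf :: "'a measure \<Rightarrow> ('k::field \<Rightarrow> real) \<Rightarrow> ('a \<Rightarrow> 'k) set" where
  "Linf M av = {X. X \<in> measurable M (Kborel av) \<and> norm_inf M av X < \<infinity>}"

definition eps_dev :: "'a measure \<Rightarrow> ('k::field \<Rightarrow> real) \<Rightarrow> ('a \<Rightarrow> 'k) \<Rightarrow> ereal" where
  "eps_dev M av X = (INF c. norm_inf M av (\<lambda>\<omega>. X \<omega> - c))"

definition EK :: "'a measure \<Rightarrow> ('k::field \<Rightarrow> real) \<Rightarrow> ('a \<Rightarrow> 'k) \<Rightarrow> 'k set" where
  "EK M av X = {c. norm_inf M av (\<lambda>\<omega>. X \<omega> - c) = eps_dev M av X}"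

end

theory Submission
  imports Defs
begin

locale nf =
  fixes av :: "'k::field \<Rightarrow> real"
  assumes nalf: "nonarch_local_field av"
begin

lemma nabs: "nonarch_abs av" using nalf unfolding nonarch_local_field_def by auto

lemma av_nonneg[simp]: "0 \<le> av x" using nabs unfolding nonarch_abs_def by auto
lemma av_eq_0[simp]: "av x = 0 \<longleftrightarrow> x = 0" using nabs unfolding nonarch_abs_def by auto
lemma av_mult: "av (x * y) = av x * av y" using nabs unfolding nonarch_abs_def by auto
lemma av_add: "av (x + y) \<le> max (av x) (av y)" using nabs unfolding nonarch_abs_def by auto
lemma av_0[simp]: "av 0 = 0" by simp
lemma av_pos: "x \<noteq> 0 \<Longrightarrow> 0 < av x" using av_nonneg[of x] av_eq_0[of x] by linarith

lemma av_1[simp]: "av 1 = 1"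
proof -
  have "av 1 = av 1 * av 1" using av_mult[of 1 1] by simp
  moreover have "av 1 \<noteq> 0" by simp
  ultimately show ?thesis by (metis mult_cancel_left1)
qed

lemma av_minus1: "av (-1) = 1"
proof -
  have "av (-1) * av (-1) = 1" using av_mult[of "-1" "-1"] by simp
  moreover have "0 \<le> av (-1)" by simp
  ultimately show ?thesis by (metis abs_of_nonneg real_sqrt_abs2 real_sqrt_mult_self real_sqrt_one)
qed

lemma av_uminus[simp]: "av (- x) = av x"
  using av_mult[of "-1" x] av_minus1 by simp

lemma av_commute: "av (x - y) = av (y - x)"
  by (metis av_uminus minus_diff_eq)

lemma av_diff: "av (x - y) \<le> max (av x) (av y)"
  using av_add[of x "-y"] by simp

lemma av_tri: "av (x - z) \<le> max (av (x - y)) (av (y - z))"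
  using av_add[of "x - y" "y - z"] by simp

lemma av_strict: assumes "av y < av x" shows "av (x + y) = av x"
proof -
  have "av (x + y) \<le> av x" using av_add[of x y] assms by simp
  moreover have "av x \<le> max (av (x + y)) (av y)" using av_diff[of "x+y" y] by simp
  ultimately show ?thesis using assms by linarith
qed

lemma av_inverse: "av (inverse x) = inverse (av x)"
proof (cases "x = 0")
  case False
  then have "av x * av (inverse x) = 1" using av_mult[of x "inverse x"] by simp
  then show ?thesis by (metis inverse_unique)
qed simp

lemma av_divide: "av (x / y) = av x / av y"
  by (simp add: divide_inverse av_mult av_inverse)

lemma av_power: "av (x ^ n) = av x ^ n"
  by (induction n) (simp_all add: av_mult)

lemma exists_big: "\<exists>t. 1 < av t"
proof -
  obtain x where x: "av x \<noteq> 0" "av x \<noteq> 1" using nalf unfolding nonarch_local_field_def by auto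
  show ?thesis
  proof (cases "av x > 1")
    case True then show ?thesis by auto
  next
    case False
    then have "0 < av x" "av x < 1" using x av_nonneg[of x] by linarith+
    then have "1 < av (inverse x)" by (simp add: av_inverse one_less_inverse)
    then show ?thesis by auto
  qed
qed

lemma TB1: "e > 0 \<Longrightarrow> \<exists>F. finite F \<and> {x. av x \<le> 1} \<subseteq> (\<Union>c\<in>F. {x. av (x - c) < e})"
  using nalf unfolding nonarch_local_field_def by auto

lemma complete_all: "\<forall>s::nat \<Rightarrow> 'k. (\<forall>e>0. \<exists>N. \<forall>m\<ge>N. \<forall>n\<ge>N. av (s m - s n) < e) \<longrightarrow>
        (\<exists>l. \<forall>e>0. \<exists>N. \<forall>n\<ge>N. av (s n - l) < e)"
  using nalf unfolding nonarch_local_field_def by (elim conjE) assumption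

lemma complete: fixes s :: "nat \<Rightarrow> 'k" shows "(\<forall>e>0. \<exists>N. \<forall>m\<ge>N. \<forall>n\<ge>N. av (s m - s n) < e) \<Longrightarrow>
        (\<exists>l. \<forall>e>0. \<exists>N. \<forall>n\<ge>N. av (s n - l) < e)"
  by (rule mp[OF spec[OF complete_all, of s]])

lemma TB: assumes "e > 0" shows "\<exists>F. finite F \<and> {x. av x \<le> R} \<subseteq> (\<Union>c\<in>F. {x. av (x - c) < e})"
proof -
  obtain t where t: "1 < av t" using exists_big by auto
  obtain m where m: "R < av t ^ m" using real_arch_pow[OF t] by auto
  have pm: "0 < av t ^ m" using t by simp
  have tm0: "t ^ m \<noteq> 0" using t by auto
  obtain F where F: "finite F" "{x. av x \<le> 1} \<subseteq> (\<Union>c\<in>F. {x. av (x - c) < e / av t ^ m})"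
    using TB1[of "e / av t ^ m"] assms pm by auto
  show ?thesis
  proof (intro exI conjI)
    show "finite ((\<lambda>c. t ^ m * c) ` F)" using F by simp
    show "{x. av x \<le> R} \<subseteq> (\<Union>c\<in>(\<lambda>c. t ^ m * c) ` F. {x. av (x - c) < e})"
    proof
      fix x assume "x \<in> {x. av x \<le> R}"
      then have "av (x / t ^ m) \<le> 1" using m pm by (simp add: av_divide av_power)
      then obtain c where c: "c \<in> F" "av (x / t ^ m - c) < e / av t ^ m" using F by auto
      have "x - t ^ m * c = t ^ m * (x / t ^ m - c)" using tm0 by (simp add: field_simps)
      then have "av (x - t ^ m * c) = av t ^ m * av (x / t ^ m - c)" by (simp add: av_mult av_power)
      also have "\<dots> < e" using c pm by (simp add: field_simps)
      finally show "x \<in> (\<Union>c\<in>(\<lambda>c. t ^ m * c) ` F. {x. av (x - c) < e})" using c by auto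
    qed
  qed
qed


lemma vd: assumes "\<rho> > 0" shows "finite {v. v \<in> range av \<and> \<rho> < v \<and> v \<le> R}"
proof (rule ccontr)
  define S where "S = {v. v \<in> range av \<and> \<rho> < v \<and> v \<le> R}"
  assume "infinite {v. v \<in> range av \<and> \<rho> < v \<and> v \<le> R}"
  then have inf: "infinite S" unfolding S_def .
  obtain F where F: "finite F" "{x. av x \<le> R} \<subseteq> (\<Union>c\<in>F. {x. av (x - c) < \<rho>})"
    using TB[OF assms] by blast
  define pick where "pick v = (SOME x. av x = v)" for v
  have pick: "av (pick v) = v" if "v \<in> S" for v
  proof -
    have "\<exists>x. av x = v" using that unfolding S_def by auto
    then show ?thesis unfolding pick_def by (rule someI_ex)
  qed
  define h where "h v = (SOME c. c \<in> F \<and> av (pick v - c) < \<rho>)" for v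
  have h: "h v \<in> F \<and> av (pick v - h v) < \<rho>" if "v \<in> S" for v
  proof -
    have "av (pick v) \<le> R" using pick[OF that] that unfolding S_def by auto
    then have "\<exists>c. c \<in> F \<and> av (pick v - c) < \<rho>" using F(2) by blast
    then show ?thesis unfolding h_def by (rule someI_ex)
  qed
  have "h ` S \<subseteq> F" using h by auto
  then have "finite (h ` S)" using F(1) finite_subset by auto
  then have "\<not> inj_on h S" using inf finite_imageD by blast
  then obtain v w where vw: "v \<in> S" "w \<in> S" "v \<noteq> w" "h v = h w" unfolding inj_on_def by blast
  have "av (pick v - pick w) \<le> max (av (pick v - h v)) (av (h v - pick w))" by (rule av_tri)
  also have "\<dots> < \<rho>" using h[OF vw(1)] h[OF vw(2)] vw(4) av_commute[of "pick w" "h w"] by simp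
  finally have lt: "av (pick v - pick w) < \<rho>" .
  have "av (pick v - pick w) = max v w"
  proof (cases "w < v")
    case True
    then have "av (pick v + (- pick w)) = av (pick v)" using pick vw by (intro av_strict) simp
    then show ?thesis using True pick vw by simp
  next
    case False
    then have "v < w" using vw(3) by linarith
    then have "av (pick w + (- pick v)) = av (pick w)" using pick vw by (intro av_strict) simp
    then show ?thesis using \<open>v < w\<close> pick vw av_commute[of "pick v" "pick w"] by simp
  qed
  moreover have "\<rho> < v" using vw(1) unfolding S_def by auto
  ultimately show False using lt by linarith
qed

lemma latt: assumes "r > 0" shows "\<exists>r'<r. \<forall>x. av x < r \<longrightarrow> av x \<le> r'"
proof -
  define T where "T = {v. v \<in> range av \<and> r/2 < v \<and> v \<le> r}"
  have fT: "finite T" unfolding T_def using vd[of "r/2" r] assms by simp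
  define T' where "T' = {v\<in>T. v < r}"
  have fT': "finite (insert (r/2) T')" using fT unfolding T'_def by simp
  define r' where "r' = Max (insert (r/2) T')"
  have "r' < r" unfolding r'_def using fT' assms by (subst Max_less_iff) (auto simp: T'_def)
  moreover have "av x \<le> r'" if "av x < r" for x
  proof (cases "av x \<le> r/2")
    case True
    then show ?thesis unfolding r'_def using fT' by (meson Max_ge insertI1 order_trans)
  next
    case False
    then have "av x \<in> T'" using that unfolding T'_def T_def by auto
    then show ?thesis unfolding r'_def using fT' by (simp add: Max_ge)
  qed
  ultimately show ?thesis by blast
qed

definition FF :: "nat \<Rightarrow> nat \<Rightarrow> 'k set" where
  "FF R n = (SOME F. finite F \<and> {x. av x \<le> real R} \<subseteq> (\<Union>c\<in>F. {x. av (x - c) < 1 / real (Suc n)}))"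

definition DD :: "'k set" where "DD = (\<Union>R. \<Union>n. FF R n)"

lemma FF: "finite (FF R n) \<and> {x. av x \<le> real R} \<subseteq> (\<Union>c\<in>FF R n. {x. av (x - c) < 1 / real (Suc n)})"
proof -
  have "\<exists>F. finite F \<and> {x. av x \<le> real R} \<subseteq> (\<Union>c\<in>F. {x. av (x - c) < 1 / real (Suc n)})"
    by (rule TB) simp
  then show ?thesis unfolding FF_def by (rule someI_ex)
qed

lemma countable_DD: "countable DD"
proof -
  have "\<And>R n. countable (FF R n)" using FF countable_finite by blast
  then show ?thesis unfolding DD_def by (intro countable_UN) auto
qed

lemma dense_DD: assumes "r > 0" shows "\<exists>d\<in>DD. av (x - d) < r"
proof -
  obtain n0 where n0: "n0 > 0" "inverse (real n0) < r" using ex_inverse_of_nat_less assms by blast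
  define n where "n = n0 - 1"
  have n: "inverse (real (Suc n)) < r" using n0 unfolding n_def by simp
  have "av x \<le> real (nat \<lceil>av x\<rceil>)" by linarith
  then obtain d where "d \<in> FF (nat \<lceil>av x\<rceil>) n" "av (x - d) < 1 / real (Suc n)"
    using FF[of "nat \<lceil>av x\<rceil>" n] by blast
  moreover have "d \<in> DD" using calculation(1) unfolding DD_def by blast
  ultimately show ?thesis using n by (intro bexI[of _ d]) (auto simp: divide_inverse)
qed

end


context nf begin

lemma Kborel_gen: "range (\<lambda>(c, r). {x. av (x - c) < r}) \<subseteq> Pow UNIV" by auto

lemma sets_Kborel: "sets (Kborel av) = sigma_sets UNIV (range (\<lambda>(c, r). {x. av (x - c) < r}))"
  unfolding Kborel_def by (rule sets_measure_of) simp

lemma space_Kborel[simp]: "space (Kborel av) = UNIV"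
  unfolding Kborel_def by (rule space_measure_of) simp

lemma ball_Kborel[simp]: "{x. av (x - c) < r} \<in> sets (Kborel av)"
  unfolding sets_Kborel by (rule sigma_sets.Basic) (auto intro: image_eqI[of _ _ "(c, r)"])

lemma coball_Kborel[simp]: "{x. r \<le> av (x - c)} \<in> sets (Kborel av)"
proof -
  have "{x. r \<le> av (x - c)} = space (Kborel av) - {x. av (x - c) < r}" by auto
  then show ?thesis by (metis ball_Kborel sets.compl_sets)
qed

lemma measurable_KborelI:
  assumes "\<And>c r. {\<omega>\<in>space M. av (Z \<omega> - c) < r} \<in> sets M"
  shows "Z \<in> M \<rightarrow>\<^sub>M Kborel av"
  unfolding Kborel_def
proof (rule measurable_measure_of)
  fix y assume "y \<in> range (\<lambda>(c, r). {x. av (x - c) < r})"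
  then obtain c r where "y = {x. av (x - c) < r}" by auto
  moreover have "Z -` {x. av (x - c) < r} \<inter> space M = {\<omega>\<in>space M. av (Z \<omega> - c) < r}" by auto
  ultimately show "Z -` y \<inter> space M \<in> sets M" using assms by simp
qed auto

lemma meas_av:
  assumes "Z \<in> M \<rightarrow>\<^sub>M Kborel av"
  shows "(\<lambda>\<omega>. av (Z \<omega> - e)) \<in> borel_measurable M"
proof (rule borel_measurableI_less)
  fix y
  have "{\<omega>\<in>space M. av (Z \<omega> - e) < y} = Z -` {x. av (x - e) < y} \<inter> space M" by auto
  then show "{\<omega>\<in>space M. av (Z \<omega> - e) < y} \<in> sets M" using measurable_sets[OF assms ball_Kborel] by simp
qed

lemma meas_av_ereal:
  assumes "Z \<in> M \<rightarrow>\<^sub>M Kborel av"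
  shows "(\<lambda>\<omega>. ereal (av (Z \<omega> - e))) \<in> borel_measurable M"
  using meas_av[OF assms] by (rule borel_measurable_ereal)

lemma ball_sets:
  assumes "Z \<in> M \<rightarrow>\<^sub>M Kborel av"
  shows "{\<omega>\<in>space M. av (Z \<omega> - e) < r} \<in> sets M"
proof -
  have "{\<omega>\<in>space M. av (Z \<omega> - e) < r} = Z -` {x. av (x - e) < r} \<inter> space M" by auto
  then show ?thesis using measurable_sets[OF assms ball_Kborel] by simp
qed

lemma meas_affine:
  assumes "Z \<in> M \<rightarrow>\<^sub>M Kborel av"
  shows "(\<lambda>\<omega>. k * Z \<omega> + b) \<in> M \<rightarrow>\<^sub>M Kborel av"
proof (cases "k = 0")
  case True then show ?thesis by simp
next
  case False
  show ?thesis
  proof (rule measurable_KborelI)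
    fix c r
    have "av (k * Z \<omega> + b - c) = av k * av (Z \<omega> - (c - b) / k)" for \<omega>
    proof -
      have "k * Z \<omega> + b - c = k * (Z \<omega> - (c - b) / k)" using False by (simp add: field_simps)
      then show ?thesis by (simp add: av_mult)
    qed
    then have "{\<omega>\<in>space M. av (k * Z \<omega> + b - c) < r} = {\<omega>\<in>space M. av (Z \<omega> - (c - b) / k) < r / av k}"
      using av_pos[OF False] by (auto simp: field_simps)
    then show "{\<omega>\<in>space M. av (k * Z \<omega> + b - c) < r} \<in> sets M" using ball_sets[OF assms] by simp
  qed
qed

lemma meas_add:
  assumes X: "X \<in> M \<rightarrow>\<^sub>M Kborel av" and Y: "Y \<in> M \<rightarrow>\<^sub>M Kborel av"
  shows "(\<lambda>\<omega>. X \<omega> + Y \<omega>) \<in> M \<rightarrow>\<^sub>M Kborel av"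
proof (rule measurable_KborelI)
  fix c r
  have "{\<omega>\<in>space M. av (X \<omega> + Y \<omega> - c) < r} =
    (\<Union>d\<in>DD. {\<omega>\<in>space M. av (X \<omega> - d) < r} \<inter> {\<omega>\<in>space M. av (Y \<omega> - (c - d)) < r})"
  proof (intro equalityI subsetI)
    fix \<omega> assume "\<omega> \<in> {\<omega>\<in>space M. av (X \<omega> + Y \<omega> - c) < r}"
    then have w: "\<omega> \<in> space M" "av (X \<omega> + Y \<omega> - c) < r" by auto
    then have "r > 0" using av_nonneg[of "X \<omega> + Y \<omega> - c"] by linarith
    then obtain d where d: "d \<in> DD" "av (X \<omega> - d) < r" using dense_DD by blast
    have "av (Y \<omega> - (c - d)) \<le> max (av (X \<omega> + Y \<omega> - c)) (av (X \<omega> - d))"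
      using av_diff[of "X \<omega> + Y \<omega> - c" "X \<omega> - d"] by (simp add: algebra_simps)
    then have "av (Y \<omega> - (c - d)) < r" using w d by linarith
    then show "\<omega> \<in> (\<Union>d\<in>DD. {\<omega>\<in>space M. av (X \<omega> - d) < r} \<inter> {\<omega>\<in>space M. av (Y \<omega> - (c - d)) < r})"
      using w d by blast
  next
    fix \<omega> assume "\<omega> \<in> (\<Union>d\<in>DD. {\<omega>\<in>space M. av (X \<omega> - d) < r} \<inter> {\<omega>\<in>space M. av (Y \<omega> - (c - d)) < r})"
    then obtain d where d: "\<omega> \<in> space M" "av (X \<omega> - d) < r" "av (Y \<omega> - (c - d)) < r" by blast
    have "av (X \<omega> + Y \<omega> - c) \<le> max (av (X \<omega> - d)) (av (Y \<omega> - (c - d)))"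
      using av_add[of "X \<omega> - d" "Y \<omega> - (c - d)"] by (simp add: algebra_simps)
    then show "\<omega> \<in> {\<omega>\<in>space M. av (X \<omega> + Y \<omega> - c) < r}" using d by auto
  qed
  also have "\<dots> \<in> sets M"
    using countable_DD ball_sets[OF X] ball_sets[OF Y] by (intro sets.countable_UN'') auto
  finally show "{\<omega>\<in>space M. av (X \<omega> + Y \<omega> - c) < r} \<in> sets M" .
qed


lemma av_add_lt: "av a < r \<Longrightarrow> av b < r \<Longrightarrow> av (a + b) < r"
  using av_add[of a b] by linarith

lemma meas_mult:
  assumes X: "X \<in> M \<rightarrow>\<^sub>M Kborel av" and Y: "Y \<in> M \<rightarrow>\<^sub>M Kborel av"
  shows "(\<lambda>\<omega>. X \<omega> * Y \<omega>) \<in> M \<rightarrow>\<^sub>M Kborel av"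
proof (rule measurable_KborelI)
  fix c r
  define cond where "cond d d' n \<longleftrightarrow> (1 / real (Suc n)) * (1 / real (Suc n)) < r \<and>
     av d * (1 / real (Suc n)) < r \<and> av d' * (1 / real (Suc n)) < r \<and> av (d * d' - c) < r" for d d' n
  define A where "A = (\<lambda>(d, d', n). if cond d d' n then
     {\<omega>\<in>space M. av (X \<omega> - d) < 1 / real (Suc n)} \<inter> {\<omega>\<in>space M. av (Y \<omega> - d') < 1 / real (Suc n)} else {})"
  have "{\<omega>\<in>space M. av (X \<omega> * Y \<omega> - c) < r} = (\<Union>i\<in>DD \<times> DD \<times> (UNIV :: nat set). A i)"
  proof (intro equalityI subsetI)
    fix \<omega> assume "\<omega> \<in> {\<omega>\<in>space M. av (X \<omega> * Y \<omega> - c) < r}"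
    then have w: "\<omega> \<in> space M" "av (X \<omega> * Y \<omega> - c) < r" by auto
    define x where "x = X \<omega>"
    define y where "y = Y \<omega>"
    have r: "r > 0" using w av_nonneg[of "X \<omega> * Y \<omega> - c"] by linarith
    define s where "s = r / (1 + av x + av y)"
    have s: "s > 0" unfolding s_def using r by (simp add: add_pos_nonneg)
    obtain n0 where n0: "n0 > 0" "inverse (real n0) < min s 1"
      using ex_inverse_of_nat_less[of "min s 1"] s by auto
    define n where "n = n0 - 1"
    define q where "q = 1 / real (Suc n)"
    have q: "q > 0" "q < s" "q < 1" using n0 unfolding q_def n_def by (simp_all add: divide_inverse)
    have tq: "t * q < r" if "0 \<le> t" "t \<le> 1 + av x + av y" for t
    proof (cases "t = 0")
      case True then show ?thesis using r by simp
    next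
      case False
      then have "t * q < t * s" using that q by simp
      also have "t * s \<le> (1 + av x + av y) * s" using that s by (intro mult_right_mono) auto
      also have "\<dots> = r"
      proof -
        have "1 + av x + av y \<noteq> 0" using av_nonneg[of x] av_nonneg[of y] by linarith
        then show ?thesis unfolding s_def by simp
      qed
      finally show ?thesis .
    qed
    obtain d where d: "d \<in> DD" "av (x - d) < q" using dense_DD q by blast
    obtain d' where d': "d' \<in> DD" "av (y - d') < q" using dense_DD q by blast
    have avd: "av d \<le> av x + 1"
    proof -
      have "av d \<le> av x \<or> av d \<le> av (x - d)" using av_diff[of x "x - d"] by (simp add: le_max_iff_disj)
      then show ?thesis using d q av_nonneg[of x] by linarith
    qed
    have avd': "av d' \<le> av y + 1"
    proof -
      have "av d' \<le> av y \<or> av d' \<le> av (y - d')" using av_diff[of y "y - d'"] by (simp add: le_max_iff_disj)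
      then show ?thesis using d' q av_nonneg[of y] by linarith
    qed
    have nx: "0 \<le> av x" and ny: "0 \<le> av y" by simp_all
    have c1: "q * q < r" using q nx ny by (intro tq) linarith+
    have c2: "av d * q < r" using avd nx ny av_nonneg[of d] by (intro tq) linarith+
    have c3: "av d' * q < r" using avd' nx ny av_nonneg[of d'] by (intro tq) linarith+
    have e1: "av ((d - x) * (d' - y)) < r"
    proof -
      have "av ((d - x) * (d' - y)) = av (x - d) * av (y - d')" by (simp add: av_mult av_commute)
      also have "\<dots> < q * q" using d d' q by (intro mult_strict_mono) auto
      finally show ?thesis using c1 by simp
    qed
    have e2: "av (x * (d' - y)) < r"
    proof -
      have "av (x * (d' - y)) = av x * av (y - d')" by (simp add: av_mult av_commute)
      also have "\<dots> \<le> av x * q" using d' by (intro mult_left_mono) auto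
      also have "\<dots> < r" using nx ny by (intro tq) linarith+
      finally show ?thesis .
    qed
    have e3: "av (y * (d - x)) < r"
    proof -
      have "av (y * (d - x)) = av y * av (x - d)" by (simp add: av_mult av_commute)
      also have "\<dots> \<le> av y * q" using d by (intro mult_left_mono) auto
      also have "\<dots> < r" using nx ny by (intro tq) linarith+
      finally show ?thesis .
    qed
    have "d * d' - c = (d - x) * (d' - y) + x * (d' - y) + y * (d - x) + (x * y - c)"
      by (simp add: algebra_simps)
    then have c4: "av (d * d' - c) < r"
      using e1 e2 e3 w(2) unfolding x_def y_def by (metis av_add_lt)
    have "cond d d' n" unfolding cond_def using c1 c2 c3 c4 q_def by simp
    then have "\<omega> \<in> A (d, d', n)" unfolding A_def using w d d' av_commute unfolding x_def y_def q_def
      by auto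
    then show "\<omega> \<in> (\<Union>i\<in>DD \<times> DD \<times> (UNIV :: nat set). A i)" using d d' by blast
  next
    fix \<omega> assume "\<omega> \<in> (\<Union>i\<in>DD \<times> DD \<times> (UNIV :: nat set). A i)"
    then obtain d d' n where dn: "\<omega> \<in> A (d, d', n)" by blast
    define q where "q = 1 / real (Suc n)"
    have q: "q > 0" unfolding q_def by simp
    have cd: "cond d d' n" and w: "\<omega> \<in> space M" "av (X \<omega> - d) < q" "av (Y \<omega> - d') < q"
      using dn unfolding A_def q_def by (auto split: if_splits)
    have e1: "av ((X \<omega> - d) * (Y \<omega> - d')) < r"
    proof -
      have "av ((X \<omega> - d) * (Y \<omega> - d')) < q * q" unfolding av_mult using w q by (intro mult_strict_mono) auto
      then show ?thesis using cd unfolding cond_def q_def by simp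
    qed
    have e2: "av (d * (Y \<omega> - d')) < r"
    proof -
      have "av (d * (Y \<omega> - d')) \<le> av d * q" unfolding av_mult using w by (intro mult_left_mono) auto
      then show ?thesis using cd unfolding cond_def q_def by simp
    qed
    have e3: "av (d' * (X \<omega> - d)) < r"
    proof -
      have "av (d' * (X \<omega> - d)) \<le> av d' * q" unfolding av_mult using w by (intro mult_left_mono) auto
      then show ?thesis using cd unfolding cond_def q_def by simp
    qed
    have e4: "av (d * d' - c) < r" using cd unfolding cond_def by simp
    have "X \<omega> * Y \<omega> - c = (X \<omega> - d) * (Y \<omega> - d') + d * (Y \<omega> - d') + d' * (X \<omega> - d) + (d * d' - c)"
      by (simp add: algebra_simps)
    then have "av (X \<omega> * Y \<omega> - c) < r" using e1 e2 e3 e4 by (metis av_add_lt)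
    then show "\<omega> \<in> {\<omega>\<in>space M. av (X \<omega> * Y \<omega> - c) < r}" using w by auto
  qed
  also have "\<dots> \<in> sets M"
  proof (rule sets.countable_UN'')
    show "countable (DD \<times> DD \<times> (UNIV :: nat set))" using countable_DD by simp
    fix i assume "i \<in> DD \<times> DD \<times> (UNIV :: nat set)"
    then obtain d d' n where "i = (d, d', n)" by auto
    then show "A i \<in> sets M" unfolding A_def using ball_sets[OF X] ball_sets[OF Y] by auto
  qed
  finally show "{\<omega>\<in>space M. av (X \<omega> * Y \<omega> - c) < r} \<in> sets M" .
qed

end


locale pnf = prob_space M + nf av for M :: "'a measure" and av :: "'k::field \<Rightarrow> real"
begin

definition nr :: "('a \<Rightarrow> 'k) \<Rightarrow> 'k \<Rightarrow> real" where
  "nr Z e = real_of_ereal (norm_inf M av (\<lambda>\<omega>. Z \<omega> - e))"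

definition good :: "('a \<Rightarrow> 'k) \<Rightarrow> bool" where
  "good Z \<longleftrightarrow> Z \<in> M \<rightarrow>\<^sub>M Kborel av \<and> (\<exists>B. AE \<omega> in M. av (Z \<omega>) \<le> B)"

lemma good_meas: "good Z \<Longrightarrow> Z \<in> M \<rightarrow>\<^sub>M Kborel av" unfolding good_def by simp

lemma good_N:
  assumes "good Z"
  shows "norm_inf M av (\<lambda>\<omega>. Z \<omega> - e) = ereal (nr Z e) \<and> 0 \<le> nr Z e"
proof -
  obtain B where B: "AE \<omega> in M. av (Z \<omega>) \<le> B" using assms unfolding good_def by auto
  have meas: "(\<lambda>\<omega>. ereal (av (Z \<omega> - e))) \<in> borel_measurable M"
    using good_meas[OF assms] by (rule meas_av_ereal)
  have "AE \<omega> in M. ereal (av (Z \<omega> - e)) \<le> ereal (max B (av e))"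
    using B
  proof (rule eventually_mono)
    fix \<omega> assume "av (Z \<omega>) \<le> B"
    then have "av (Z \<omega> - e) \<le> max B (av e)"
      using av_diff[of "Z \<omega>" e] by linarith
    then show "ereal (av (Z \<omega> - e)) \<le> ereal (max B (av e))" by (simp only: ereal_less_eq)
  qed
  then have up: "norm_inf M av (\<lambda>\<omega>. Z \<omega> - e) \<le> ereal (max B (av e))"
    unfolding norm_inf_def using meas by (intro esssup_I) auto
  have "esssup M (\<lambda>\<omega>. ereal 0) \<le> norm_inf M av (\<lambda>\<omega>. Z \<omega> - e)"
    unfolding norm_inf_def by (intro esssup_AE_mono) auto
  then have lo: "0 \<le> norm_inf M av (\<lambda>\<omega>. Z \<omega> - e)"
    using esssup_const[of M "ereal 0"] emeasure_space_1 by (simp add: zero_ereal_def)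
  obtain U where up2: "norm_inf M av (\<lambda>\<omega>. Z \<omega> - e) \<le> ereal U" using up by blast
  show ?thesis using up2 lo unfolding nr_def
    by (cases "norm_inf M av (\<lambda>\<omega>. Z \<omega> - e)") auto
qed

lemma nr_nonneg: "good Z \<Longrightarrow> 0 \<le> nr Z e" using good_N by blast

lemma nr_AE: assumes "good Z" shows "AE \<omega> in M. av (Z \<omega> - e) \<le> nr Z e"
proof -
  have "AE \<omega> in M. ereal (av (Z \<omega> - e)) \<le> norm_inf M av (\<lambda>\<omega>. Z \<omega> - e)"
    unfolding norm_inf_def by (rule esssup_AE)
  then show ?thesis using good_N[OF assms, of e] by simp
qed

lemma nr_le: assumes "good Z" "AE \<omega> in M. av (Z \<omega> - e) \<le> z" shows "nr Z e \<le> z"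
proof -
  have meas: "(\<lambda>\<omega>. ereal (av (Z \<omega> - e))) \<in> borel_measurable M"
    using good_meas[OF assms(1)] by (rule meas_av_ereal)
  have "norm_inf M av (\<lambda>\<omega>. Z \<omega> - e) \<le> ereal z"
    unfolding norm_inf_def using meas assms(2) by (intro esssup_I) auto
  then show ?thesis using good_N[OF assms(1), of e] by simp
qed

lemma AE_ex: assumes "AE \<omega> in M. P \<omega>" shows "\<exists>\<omega>\<in>space M. P \<omega>"
proof (rule ccontr)
  assume nex: "\<not> (\<exists>\<omega>\<in>space M. P \<omega>)"
  have "AE \<omega> in M. False" using assms AE_space by eventually_elim (use nex in blast)
  then show False using AE_False by simp
qed

lemma nr_pos_event:
  assumes "good Z" "0 < r" "r \<le> nr Z e"
  shows "\<not> (AE \<omega> in M. av (Z \<omega> - e) < r)"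
proof
  assume a: "AE \<omega> in M. av (Z \<omega> - e) < r"
  obtain r' where r': "r' < r" "\<And>x. av x < r \<Longrightarrow> av x \<le> r'" using latt[OF assms(2)] by blast
  have "AE \<omega> in M. av (Z \<omega> - e) \<le> r'" using a by (rule eventually_mono) (rule r'(2))
  then have "nr Z e \<le> r'" by (rule nr_le[OF assms(1)])
  then show False using r' assms(3) by linarith
qed

lemma EK_char: assumes "good Z" shows "EK M av Z = {e. \<forall>e'. nr Z e \<le> nr Z e'}"
proof -
  have N: "\<And>c. norm_inf M av (\<lambda>\<omega>. Z \<omega> - c) = ereal (nr Z c)" using good_N[OF assms] by blast
  have "e \<in> EK M av Z \<longleftrightarrow> (\<forall>e'. nr Z e \<le> nr Z e')" for e
  proof
    assume "e \<in> EK M av Z"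
    then have eq: "ereal (nr Z e) = (INF c. ereal (nr Z c))" unfolding EK_def eps_dev_def N by simp
    show "\<forall>e'. nr Z e \<le> nr Z e'"
    proof
      fix e'
      have "ereal (nr Z e) \<le> ereal (nr Z e')" unfolding eq by (rule INF_lower) simp
      then show "nr Z e \<le> nr Z e'" by simp
    qed
  next
    assume a: "\<forall>e'. nr Z e \<le> nr Z e'"
    have "ereal (nr Z e) = (INF c. ereal (nr Z c))"
    proof (rule antisym)
      show "ereal (nr Z e) \<le> (INF c. ereal (nr Z c))" using a by (intro INF_greatest) simp
      show "(INF c. ereal (nr Z c)) \<le> ereal (nr Z e)" by (rule INF_lower) simp
    qed
    then show "e \<in> EK M av Z" unfolding EK_def eps_dev_def N by simp
  qed
  then show ?thesis by blast
qed

lemma dist_centers: assumes "good Z" shows "av (e - e') \<le> max (nr Z e) (nr Z e')"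
proof -
  have "AE \<omega> in M. av (Z \<omega> - e) \<le> nr Z e \<and> av (Z \<omega> - e') \<le> nr Z e'"
    using nr_AE[OF assms, of e] nr_AE[OF assms, of e'] by eventually_elim auto
  then obtain \<omega> where w: "av (Z \<omega> - e) \<le> nr Z e" "av (Z \<omega> - e') \<le> nr Z e'" using AE_ex by blast
  have "av (e - e') \<le> max (av (e - Z \<omega>)) (av (Z \<omega> - e'))" by (rule av_tri)
  then show ?thesis using w av_commute[of e "Z \<omega>"] by linarith
qed

lemma nr_shift: assumes "good Z" shows "nr Z e \<le> max (nr Z e') (av (e' - e))"
proof (rule nr_le[OF assms])
  show "AE \<omega> in M. av (Z \<omega> - e) \<le> max (nr Z e') (av (e' - e))"
    using nr_AE[OF assms, of e']
  proof (rule eventually_mono)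
    fix \<omega> assume "av (Z \<omega> - e') \<le> nr Z e'"
    then show "av (Z \<omega> - e) \<le> max (nr Z e') (av (e' - e))"
      using av_tri[of "Z \<omega>" e e'] by linarith
  qed
qed

lemma nr_in_range: assumes "good Z" "0 < nr Z e" shows "nr Z e \<in> range av"
proof (rule ccontr)
  assume nr: "nr Z e \<notin> range av"
  have "AE \<omega> in M. av (Z \<omega> - e) < nr Z e"
    using nr_AE[OF assms(1), of e]
  proof (rule eventually_mono)
    fix \<omega> assume "av (Z \<omega> - e) \<le> nr Z e"
    moreover have "av (Z \<omega> - e) \<noteq> nr Z e" using nr by (metis rangeI)
    ultimately show "av (Z \<omega> - e) < nr Z e" by simp
  qed
  then show False using nr_pos_event[OF assms(1) assms(2) order_refl] by simp
qed

end


context pnf begin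

lemma inv_Suc_mono: "m \<ge> N \<Longrightarrow> 1 / real (Suc m) \<le> 1 / real (Suc N)"
  by (simp add: frac_le)

lemma exists_min: assumes "good Z" shows "\<exists>e. \<forall>e'. nr Z e \<le> nr Z e'"
proof -
  define f where "f = nr Z"
  have f0: "\<And>e. 0 \<le> f e" unfolding f_def using nr_nonneg[OF assms] .
  have bdd: "bdd_below (range f)" using f0 by (intro bdd_belowI[of _ 0]) auto
  define \<epsilon> where "\<epsilon> = Inf (range f)"
  have lowr: "\<And>e. \<epsilon> \<le> f e" unfolding \<epsilon>_def using bdd by (intro cInf_lower) auto
  have less: "\<And>y. \<epsilon> < y \<Longrightarrow> \<exists>e. f e < y" unfolding \<epsilon>_def using bdd by (subst (asm) cInf_less_iff) auto
  show ?thesis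
  proof (cases "\<epsilon> > 0")
    case True
    obtain e1 where e1: "f e1 < 2 * \<epsilon>" using less[of "2 * \<epsilon>"] True by auto
    define W where "W = {v. v \<in> range av \<and> \<epsilon> / 2 < v \<and> v \<le> 2 * \<epsilon>}"
    have fW: "finite W" unfolding W_def using vd[of "\<epsilon> / 2" "2 * \<epsilon>"] True by simp
    define V where "V = {v \<in> W. \<exists>e. f e = v}"
    have fV: "finite V" using fW unfolding V_def by simp
    have inV: "f e \<in> V" if "f e \<le> 2 * \<epsilon>" for e
    proof -
      have "0 < f e" using lowr[of e] True by linarith
      then have "f e \<in> range av" unfolding f_def using nr_in_range[OF assms] by simp
      then show ?thesis unfolding V_def W_def using that lowr[of e] True by auto
    qed
    have V1: "f e1 \<in> V" using inV e1 by simp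
    then have "V \<noteq> {}" by auto
    then have "Min V \<in> V" using fV by (rule Min_in[rotated])
    then obtain em where em: "f em = Min V" unfolding V_def by auto
    show ?thesis
    proof (intro exI allI)
      fix e'
      show "nr Z em \<le> nr Z e'"
      proof (cases "f e' \<le> 2 * \<epsilon>")
        case True
        then show ?thesis using inV[OF True] fV em unfolding f_def by (simp add: Min_le)
      next
        case False
        have "f em \<le> f e1" using em V1 fV by (simp add: Min_le)
        then show ?thesis using False e1 unfolding f_def by linarith
      qed
    qed
  next
    case False
    have "\<forall>n. \<exists>x. f x < 1 / real (Suc n)"
    proof
      fix n
      have "\<epsilon> < 1 / real (Suc n)" using False by (smt (verit) divide_pos_pos of_nat_0_less_iff zero_less_Suc)
      then show "\<exists>x. f x < 1 / real (Suc n)" by (rule less)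
    qed
    then obtain c where c: "\<And>n. f (c n) < 1 / real (Suc n)" by metis
    have cauchy: "\<forall>\<delta>>0. \<exists>N. \<forall>m\<ge>N. \<forall>n\<ge>N. av (c m - c n) < \<delta>"
    proof (intro allI impI)
      fix \<delta> :: real assume "\<delta> > 0"
      then obtain N0 where N0: "N0 > 0" "inverse (real N0) < \<delta>" using ex_inverse_of_nat_less by blast
      define N where "N = N0 - 1"
      have N: "1 / real (Suc N) < \<delta>" using N0 unfolding N_def by (simp add: divide_inverse)
      show "\<exists>N. \<forall>m\<ge>N. \<forall>n\<ge>N. av (c m - c n) < \<delta>"
      proof (intro exI allI impI)
        fix m n assume mn: "N \<le> m" "N \<le> n"
        have "av (c m - c n) \<le> max (f (c m)) (f (c n))" unfolding f_def by (rule dist_centers[OF assms])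
        moreover have "f (c m) < \<delta>" using c[of m] inv_Suc_mono[OF mn(1)] N by linarith
        moreover have "f (c n) < \<delta>" using c[of n] inv_Suc_mono[OF mn(2)] N by linarith
        ultimately show "av (c m - c n) < \<delta>" by linarith
      qed
    qed
    obtain l where l: "\<forall>\<delta>>0. \<exists>N. \<forall>n\<ge>N. av (c n - l) < \<delta>" using complete[OF cauchy] by blast
    have fl: "f l < \<delta>" if dpos: "\<delta> > 0" for \<delta>
    proof -
      obtain N1 where N1: "\<forall>n\<ge>N1. av (c n - l) < \<delta>" using l dpos by blast
      obtain N0 where N0: "N0 > 0" "inverse (real N0) < \<delta>" using ex_inverse_of_nat_less dpos by blast
      define N2 where "N2 = N0 - 1"
      have N2: "1 / real (Suc N2) < \<delta>" using N0 unfolding N2_def by (simp add: divide_inverse)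
      define n where "n = max N1 N2"
      have "f l \<le> max (f (c n)) (av (c n - l))" unfolding f_def by (rule nr_shift[OF assms])
      moreover have "f (c n) < \<delta>" using c[of n] inv_Suc_mono[of N2 n] N2 unfolding n_def by simp
      moreover have "av (c n - l) < \<delta>" using N1 unfolding n_def by simp
      ultimately show ?thesis by linarith
    qed
    have "f l \<le> 0"
    proof (rule ccontr)
      assume "\<not> f l \<le> 0"
      then show False using fl[of "f l"] by simp
    qed
    then show ?thesis using f0 unfolding f_def by (metis order_trans)
  qed
qed

lemma EK_nonempty: "good Z \<Longrightarrow> EK M av Z \<noteq> {}"
  using exists_min EK_char by auto

lemma EK_same: assumes "good Z" "e \<in> EK M av Z" "e' \<in> EK M av Z" shows "nr Z e = nr Z e'"
  using assms EK_char by (metis (mono_tags, lifting) mem_Collect_eq order_antisym)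

lemma EK_ball: assumes "good Z" "e0 \<in> EK M av Z"
  shows "e \<in> EK M av Z \<longleftrightarrow> av (e - e0) \<le> nr Z e0"
proof
  assume e: "e \<in> EK M av Z"
  have "av (e - e0) \<le> max (nr Z e) (nr Z e0)" by (rule dist_centers[OF assms(1)])
  then show "av (e - e0) \<le> nr Z e0" using EK_same[OF assms(1) e assms(2)] by simp
next
  assume a: "av (e - e0) \<le> nr Z e0"
  have "nr Z e \<le> max (nr Z e0) (av (e0 - e))" by (rule nr_shift[OF assms(1)])
  then have "nr Z e \<le> nr Z e0" using a av_commute[of e e0] by linarith
  moreover have "\<forall>e'. nr Z e0 \<le> nr Z e'" using assms EK_char by auto
  ultimately show "e \<in> EK M av Z" using EK_char[OF assms(1)] by (auto intro: order_trans)
qed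

end


context pnf begin

lemma good_add: assumes "good X" "good Y" shows "good (\<lambda>\<omega>. X \<omega> + Y \<omega>)"
proof -
  obtain B1 where B1: "AE \<omega> in M. av (X \<omega>) \<le> B1" using assms(1) unfolding good_def by auto
  obtain B2 where B2: "AE \<omega> in M. av (Y \<omega>) \<le> B2" using assms(2) unfolding good_def by auto
  have "AE \<omega> in M. av (X \<omega> + Y \<omega>) \<le> max B1 B2" using B1 B2
  proof eventually_elim
    case (elim \<omega>) then show ?case using av_add[of "X \<omega>" "Y \<omega>"] by linarith
  qed
  then show ?thesis unfolding good_def using meas_add good_meas assms by blast
qed

lemma good_mult: assumes "good X" "good Y" shows "good (\<lambda>\<omega>. X \<omega> * Y \<omega>)"
proof -
  obtain B1 where B1: "AE \<omega> in M. av (X \<omega>) \<le> B1" using assms(1) unfolding good_def by auto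
  obtain B2 where B2: "AE \<omega> in M. av (Y \<omega>) \<le> B2" using assms(2) unfolding good_def by auto
  have "AE \<omega> in M. av (X \<omega> * Y \<omega>) \<le> max B1 0 * max B2 0" using B1 B2
  proof eventually_elim
    case (elim \<omega>)
    have "av (X \<omega>) * av (Y \<omega>) \<le> max B1 0 * max B2 0"
      using elim by (intro mult_mono) auto
    then show ?case by (simp add: av_mult)
  qed
  then show ?thesis unfolding good_def using meas_mult good_meas assms by blast
qed

lemma good_affine: assumes "good X" shows "good (\<lambda>\<omega>. k * X \<omega> + b)"
proof -
  obtain B1 where B1: "AE \<omega> in M. av (X \<omega>) \<le> B1" using assms(1) unfolding good_def by auto
  have "AE \<omega> in M. av (k * X \<omega> + b) \<le> max (av k * max B1 0) (av b)" using B1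
  proof eventually_elim
    case (elim \<omega>)
    have "av k * av (X \<omega>) \<le> av k * max B1 0" using elim by (intro mult_left_mono) auto
    then show ?case using av_add[of "k * X \<omega>" b] by (simp add: av_mult)
  qed
  then show ?thesis unfolding good_def using meas_affine good_meas assms by blast
qed

lemma prob_pos_iff: "A \<in> sets M \<Longrightarrow> 0 < prob A \<longleftrightarrow> \<not> (AE \<omega> in M. \<omega> \<notin> A)"
  using prob_eq_0[of A] measure_nonneg[of M A] by linarith

lemma indep_sym: assumes "indep_var S X T Y" shows "indep_var T Y S X"
  using assms unfolding indep_var_eq indep_sets2_eq
  apply (elim conjE)
  apply (intro conjI ballI)
  apply assumption+
  apply (subst Int_commute, subst mult.commute)
  apply blast
  done

lemma indep_pos:
  assumes ind: "indep_var (Kborel av) X (Kborel av) Y"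
    and S: "S \<in> sets (Kborel av)" and T: "T \<in> sets (Kborel av)"
    and pS: "0 < prob (X -` S \<inter> space M)" and pT: "0 < prob (Y -` T \<inter> space M)"
  shows "0 < prob (X -` S \<inter> Y -` T \<inter> space M)"
proof -
  have "(\<lambda>x. (X x, Y x)) -` (S \<times> T) \<inter> space M = X -` S \<inter> Y -` T \<inter> space M" by auto
  then have "prob (X -` S \<inter> Y -` T \<inter> space M) = prob (X -` S \<inter> space M) * prob (Y -` T \<inter> space M)"
    using indep_varD[OF ind S T] by simp
  then show ?thesis using pS pT by simp
qed

lemma class_event:
  assumes gY: "good Y" and S0: "S0 \<in> sets (Kborel av)" and p: "0 < prob (Y -` S0 \<inter> space M)"
    and R: "AE \<omega> in M. av (Y \<omega> - c) \<le> R" and eta: "\<eta> > 0"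
  shows "\<exists>g. 0 < prob (Y -` (S0 \<inter> {y. av (y - g) < \<eta>}) \<inter> space M)"
proof (rule ccontr)
  assume no: "\<not> ?thesis"
  obtain F where F: "finite F" "{x. av x \<le> R} \<subseteq> (\<Union>f\<in>F. {x. av (x - f) < \<eta>})"
    using TB[OF eta] by blast
  have meas: "Y -` (S0 \<inter> {y. av (y - g) < \<eta>}) \<inter> space M \<in> sets M" for g
  proof -
    have "S0 \<inter> {y. av (y - g) < \<eta>} \<in> sets (Kborel av)" by (intro sets.Int S0 ball_Kborel)
    then show ?thesis by (rule measurable_sets[OF good_meas[OF gY]])
  qed
  have z: "AE \<omega> in M. \<omega> \<notin> Y -` (S0 \<inter> {y. av (y - g) < \<eta>}) \<inter> space M" for g
    using no prob_pos_iff[OF meas[of g]] by blast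
  have "AE \<omega> in M. \<forall>f\<in>F. \<omega> \<notin> Y -` (S0 \<inter> {y. av (y - (c + f)) < \<eta>}) \<inter> space M"
    using F(1) z by (intro AE_finite_allI) auto
  then have "AE \<omega> in M. \<omega> \<notin> Y -` S0 \<inter> space M" using R
  proof eventually_elim
    case (elim \<omega>)
    show ?case
    proof
      assume w: "\<omega> \<in> Y -` S0 \<inter> space M"
      obtain f where f: "f \<in> F" "av (Y \<omega> - c - f) < \<eta>" using F(2) elim(2) by blast
      then have "\<omega> \<in> Y -` (S0 \<inter> {y. av (y - (c + f)) < \<eta>}) \<inter> space M" using w by (simp add: algebra_simps)
      then show False using elim(1) f(1) by blast
    qed
  qed
  then show False using p prob_pos_iff[of "Y -` S0 \<inter> space M"] measurable_sets[OF good_meas[OF gY] S0] by blast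
qed

lemma witness:
  assumes "A \<in> sets M" "0 < prob A" "AE \<omega> in M. P \<omega>" shows "\<exists>\<omega>\<in>A. P \<omega>"
proof (rule ccontr)
  assume "\<not> ?thesis"
  then have "AE \<omega> in M. \<omega> \<notin> A" using assms(3) by (auto elim: eventually_mono)
  then show False using prob_pos_iff[OF assms(1)] assms(2) by blast
qed

lemma coball_event_pos:
  assumes gX: "good X" and r: "0 < r" "r \<le> nr X u"
  shows "0 < prob (X -` {x. r \<le> av (x - u)} \<inter> space M)"
proof -
  have ms: "X -` {x. r \<le> av (x - u)} \<inter> space M \<in> sets M"
    using measurable_sets[OF good_meas[OF gX] coball_Kborel] .
  have "\<not> (AE \<omega> in M. \<omega> \<notin> X -` {x. r \<le> av (x - u)} \<inter> space M)"
  proof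
    assume "AE \<omega> in M. \<omega> \<notin> X -` {x. r \<le> av (x - u)} \<inter> space M"
    then have "AE \<omega> in M. av (X \<omega> - u) < r" using AE_space by eventually_elim auto
    then show False using nr_pos_event[OF gX r] by simp
  qed
  then show ?thesis using prob_pos_iff[OF ms] by simp
qed

lemma prodLB:
  assumes ind: "indep_var (Kborel av) X (Kborel av) Y"
    and gX: "good X" and gY: "good Y"
    and rmin: "\<And>u. rX \<le> nr X u" and rX: "0 < rX"
    and K: "AE \<omega> in M. av (X \<omega>) \<le> K" "0 < K"
    and S: "S \<in> sets (Kborel av)" "0 < prob (Y -` S \<inter> space M)" "\<And>y. y \<in> S \<Longrightarrow> av (y - g) < \<eta>"
    and rho: "K * \<eta> \<le> \<rho>" "\<rho> \<le> av g * rX" "0 < \<rho>"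
  shows "\<rho> \<le> nr (\<lambda>\<omega>. X \<omega> * Y \<omega>) d"
proof (rule ccontr)
  assume "\<not> ?thesis"
  then have lt: "nr (\<lambda>\<omega>. X \<omega> * Y \<omega>) d < \<rho>" by simp
  have g0: "g \<noteq> 0" using rho by auto
  define u where "u = d / g"
  define A where "A = {x. rX \<le> av (x - u)}"
  have pA: "0 < prob (X -` A \<inter> space M)" unfolding A_def by (rule coball_event_pos[OF gX rX rmin])
  have pAS: "0 < prob (X -` A \<inter> Y -` S \<inter> space M)"
    by (rule indep_pos[OF ind _ S(1) pA S(2)]) (simp add: A_def)
  have ms: "X -` A \<inter> Y -` S \<inter> space M \<in> sets M"
  proof -
    have "X -` A \<inter> Y -` S \<inter> space M = (X -` A \<inter> space M) \<inter> (Y -` S \<inter> space M)" by auto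
    then show ?thesis using measurable_sets[OF good_meas[OF gX], of A] measurable_sets[OF good_meas[OF gY] S(1)]
      unfolding A_def by simp
  qed
  have "AE \<omega> in M. av (X \<omega> * Y \<omega> - d) \<le> nr (\<lambda>\<omega>. X \<omega> * Y \<omega>) d"
    using nr_AE[OF good_mult[OF gX gY]] .
  then have "AE \<omega> in M. \<omega> \<notin> X -` A \<inter> Y -` S \<inter> space M" using K(1)
  proof eventually_elim
    case (elim \<omega>)
    show ?case
    proof
      assume w: "\<omega> \<in> X -` A \<inter> Y -` S \<inter> space M"
      define x where "x = X \<omega>"
      define y where "y = Y \<omega>"
      have xu: "rX \<le> av (x - u)" using w unfolding A_def x_def by auto
      have yg: "av (y - g) < \<eta>" using w S(3) unfolding y_def by auto
      have xK: "av x \<le> K" using elim unfolding x_def by simp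
      have big: "\<rho> \<le> av (g * (x - u))"
      proof -
        have "av g * rX \<le> av g * av (x - u)" using xu by (intro mult_left_mono) auto
        then show ?thesis using rho(2) by (simp add: av_mult)
      qed
      have small: "av (x * (y - g)) < \<rho>"
      proof -
        have "av x * av (y - g) \<le> K * av (y - g)" using xK by (intro mult_right_mono) auto
        also have "\<dots> < K * \<eta>" using yg K(2) by simp
        finally show ?thesis using rho(1) by (simp add: av_mult)
      qed
      have "x * y - d = g * (x - u) + x * (y - g)" unfolding u_def using g0 by (simp add: field_simps)
      then have "av (x * y - d) = av (g * (x - u))" using small big by (simp add: av_strict)
      then have "\<rho> \<le> av (x * y - d)" using big by simp
      then show False using elim(1) lt unfolding x_def y_def by linarith
    qed
  qed
  then show False using prob_pos_iff[OF ms] pAS by blast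
qed

lemma sumLB:
  assumes ind: "indep_var (Kborel av) X (Kborel av) Y"
    and gX: "good X" and gY: "good Y"
    and rmin: "\<And>u. rX \<le> nr X u" and rX: "0 < rX"
    and S: "S \<in> sets (Kborel av)" "0 < prob (Y -` S \<inter> space M)" "\<And>y. y \<in> S \<Longrightarrow> av (y - g) < rX"
  shows "rX \<le> nr (\<lambda>\<omega>. X \<omega> + Y \<omega>) d"
proof (rule ccontr)
  assume "\<not> ?thesis"
  then have lt: "nr (\<lambda>\<omega>. X \<omega> + Y \<omega>) d < rX" by simp
  define u where "u = d - g"
  define A where "A = {x. rX \<le> av (x - u)}"
  have pA: "0 < prob (X -` A \<inter> space M)" unfolding A_def by (rule coball_event_pos[OF gX rX rmin])
  have pAS: "0 < prob (X -` A \<inter> Y -` S \<inter> space M)"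
    by (rule indep_pos[OF ind _ S(1) pA S(2)]) (simp add: A_def)
  have ms: "X -` A \<inter> Y -` S \<inter> space M \<in> sets M"
  proof -
    have "X -` A \<inter> Y -` S \<inter> space M = (X -` A \<inter> space M) \<inter> (Y -` S \<inter> space M)" by auto
    then show ?thesis using measurable_sets[OF good_meas[OF gX], of A] measurable_sets[OF good_meas[OF gY] S(1)]
      unfolding A_def by simp
  qed
  have "AE \<omega> in M. av (X \<omega> + Y \<omega> - d) \<le> nr (\<lambda>\<omega>. X \<omega> + Y \<omega>) d"
    using nr_AE[OF good_add[OF gX gY]] .
  then have "AE \<omega> in M. \<omega> \<notin> X -` A \<inter> Y -` S \<inter> space M"
  proof (rule eventually_mono)
    fix \<omega> assume le: "av (X \<omega> + Y \<omega> - d) \<le> nr (\<lambda>\<omega>. X \<omega> + Y \<omega>) d"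
    show "\<omega> \<notin> X -` A \<inter> Y -` S \<inter> space M"
    proof
      assume w: "\<omega> \<in> X -` A \<inter> Y -` S \<inter> space M"
      have xu: "rX \<le> av (X \<omega> - u)" using w unfolding A_def by auto
      have yg: "av (Y \<omega> - g) < rX" using w S(3) by auto
      have "X \<omega> + Y \<omega> - d = (X \<omega> - u) + (Y \<omega> - g)" unfolding u_def by (simp add: algebra_simps)
      then have "av (X \<omega> + Y \<omega> - d) = av ((X \<omega> - u) + (Y \<omega> - g))" by (rule arg_cong)
      also have "\<dots> = av (X \<omega> - u)" using xu yg by (intro av_strict) linarith
      finally have "av (X \<omega> + Y \<omega> - d) = av (X \<omega> - u)" .
      then show False using le lt xu by linarith
    qed
  qed
  then show False using prob_pos_iff[OF ms] pAS by blast
qed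

end


context pnf begin

lemma nr_const: "nr (\<lambda>\<omega>. b) e = av (b - e)"
proof -
  have g: "good (\<lambda>\<omega>. b)" unfolding good_def by auto
  have "nr (\<lambda>\<omega>. b) e \<le> av (b - e)" by (rule nr_le[OF g]) simp
  moreover obtain \<omega> where "av (b - e) \<le> nr (\<lambda>\<omega>. b) e" using AE_ex[OF nr_AE[OF g, of e]] by blast
  ultimately show ?thesis by linarith
qed

lemma nr_affine:
  assumes g: "good X" and k: "k \<noteq> 0"
  shows "nr (\<lambda>\<omega>. k * X \<omega> + b) (k * a + b) = av k * nr X a"
proof -
  have ka: "0 < av k" using av_pos[OF k] .
  have "norm_inf M av (\<lambda>\<omega>. k * X \<omega> + b - (k * a + b)) = esssup M (\<lambda>\<omega>. ereal (av k) * ereal (av (X \<omega> - a)))"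
  proof -
    have "\<And>\<omega>. av (k * X \<omega> + b - (k * a + b)) = av k * av (X \<omega> - a)"
    proof -
      fix \<omega>
      have "k * X \<omega> + b - (k * a + b) = k * (X \<omega> - a)" by (simp add: algebra_simps)
      then show "av (k * X \<omega> + b - (k * a + b)) = av k * av (X \<omega> - a)" by (simp add: av_mult)
    qed
    then show ?thesis unfolding norm_inf_def by simp
  qed
  also have "\<dots> = ereal (av k) * norm_inf M av (\<lambda>\<omega>. X \<omega> - a)"
    unfolding norm_inf_def using ka by (rule esssup_cmult)
  also have "\<dots> = ereal (av k * nr X a)" using good_N[OF g, of a] by simp
  finally show ?thesis unfolding nr_def by simp
qed

lemma partA: assumes g: "good X"
  shows "EK M av (\<lambda>\<omega>. k * X \<omega> + b) = (\<lambda>a. k * a + b) ` EK M av X"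
proof (cases "k = 0")
  case True
  have "EK M av (\<lambda>\<omega>. k * X \<omega> + b) = EK M av (\<lambda>\<omega>. b)" using True by simp
  also have "\<dots> = {b}"
  proof -
    have g2: "good (\<lambda>\<omega>. b)" unfolding good_def by auto
    have "e \<in> EK M av (\<lambda>\<omega>. b) \<longleftrightarrow> e = b" for e
    proof
      assume "e \<in> EK M av (\<lambda>\<omega>. b)"
      then have "av (b - e) \<le> av (b - b)" unfolding EK_char[OF g2] nr_const by blast
      then have "av (b - e) = 0" using av_nonneg[of "b - e"] by simp
      then show "e = b" by simp
    next
      assume "e = b"
      then show "e \<in> EK M av (\<lambda>\<omega>. b)" unfolding EK_char[OF g2] nr_const by simp
    qed
    then show ?thesis by blast
  qed
  also have "\<dots> = (\<lambda>a. k * a + b) ` EK M av X" using True EK_nonempty[OF g] by auto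
  finally show ?thesis .
next
  case False
  have ga: "good (\<lambda>\<omega>. k * X \<omega> + b)" by (rule good_affine[OF g])
  have ka: "0 < av k" using av_pos[OF False] .
  have rep: "\<And>e. e = k * ((e - b) / k) + b" using False by (simp add: field_simps)
  show ?thesis
  proof (intro equalityI subsetI)
    fix e assume e: "e \<in> EK M av (\<lambda>\<omega>. k * X \<omega> + b)"
    define a where "a = (e - b) / k"
    have ea: "e = k * a + b" unfolding a_def by (rule rep)
    have "a \<in> EK M av X" unfolding EK_char[OF g]
    proof (intro CollectI allI)
      fix a'
      have "nr (\<lambda>\<omega>. k * X \<omega> + b) (k * a + b) \<le> nr (\<lambda>\<omega>. k * X \<omega> + b) (k * a' + b)"
        using e ea unfolding EK_char[OF ga] by auto
      then have "av k * nr X a \<le> av k * nr X a'" using nr_affine[OF g False] by simp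
      then show "nr X a \<le> nr X a'" using ka by simp
    qed
    then show "e \<in> (\<lambda>a. k * a + b) ` EK M av X" using ea by blast
  next
    fix e assume "e \<in> (\<lambda>a. k * a + b) ` EK M av X"
    then obtain a where a: "a \<in> EK M av X" "e = k * a + b" by blast
    show "e \<in> EK M av (\<lambda>\<omega>. k * X \<omega> + b)" unfolding EK_char[OF ga]
    proof (intro CollectI allI)
      fix e'
      have "nr X a \<le> nr X ((e' - b) / k)" using a(1) unfolding EK_char[OF g] by auto
      then have "av k * nr X a \<le> av k * nr X ((e' - b) / k)" using ka by simp
      then have H: "nr (\<lambda>\<omega>. k * X \<omega> + b) (k * a + b) \<le> nr (\<lambda>\<omega>. k * X \<omega> + b) (k * ((e' - b) / k) + b)"
        by (simp only: nr_affine[OF g False])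
      have eq: "k * ((e' - b) / k) + b = e'" using rep[of e'] by simp
      show "nr (\<lambda>\<omega>. k * X \<omega> + b) e \<le> nr (\<lambda>\<omega>. k * X \<omega> + b) e'" using H unfolding eq a(2)[symmetric] .
    qed
  qed
qed

lemma nr_sum_le: assumes gX: "good X" and gY: "good Y"
  shows "nr (\<lambda>\<omega>. X \<omega> + Y \<omega>) (a + c) \<le> max (nr X a) (nr Y c)"
proof (rule nr_le[OF good_add[OF gX gY]])
  show "AE \<omega> in M. av (X \<omega> + Y \<omega> - (a + c)) \<le> max (nr X a) (nr Y c)"
    using nr_AE[OF gX, of a] nr_AE[OF gY, of c]
  proof eventually_elim
    case (elim \<omega>)
    have "av (X \<omega> + Y \<omega> - (a + c)) = av ((X \<omega> - a) + (Y \<omega> - c))" by (simp add: algebra_simps)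
    then show ?case using av_add[of "X \<omega> - a" "Y \<omega> - c"] elim by linarith
  qed
qed

lemma partB1: assumes gX: "good X" and gY: "good Y"
  shows "EK M av (\<lambda>\<omega>. X \<omega> + Y \<omega>) \<subseteq> {a + c | a c. a \<in> EK M av X \<and> c \<in> EK M av Y}"
proof
  fix e assume e: "e \<in> EK M av (\<lambda>\<omega>. X \<omega> + Y \<omega>)"
  have gS: "good (\<lambda>\<omega>. X \<omega> + Y \<omega>)" by (rule good_add[OF gX gY])
  obtain a where a: "a \<in> EK M av X" using EK_nonempty[OF gX] by blast
  obtain c where c: "c \<in> EK M av Y" using EK_nonempty[OF gY] by blast
  have "av (e - (a + c)) \<le> max (nr (\<lambda>\<omega>. X \<omega> + Y \<omega>) e) (nr (\<lambda>\<omega>. X \<omega> + Y \<omega>) (a + c))"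
    by (rule dist_centers[OF gS])
  moreover have "nr (\<lambda>\<omega>. X \<omega> + Y \<omega>) e \<le> nr (\<lambda>\<omega>. X \<omega> + Y \<omega>) (a + c)"
    using e unfolding EK_char[OF gS] by auto
  moreover have "nr (\<lambda>\<omega>. X \<omega> + Y \<omega>) (a + c) \<le> max (nr X a) (nr Y c)" by (rule nr_sum_le[OF gX gY])
  ultimately have d: "av (e - (a + c)) \<le> max (nr X a) (nr Y c)" by linarith
  show "e \<in> {a + c | a c. a \<in> EK M av X \<and> c \<in> EK M av Y}"
  proof (cases "nr Y c \<le> nr X a")
    case True
    have "av ((e - c) - a) \<le> nr X a" using d True by (simp add: algebra_simps)
    then have "e - c \<in> EK M av X" using EK_ball[OF gX a] by simp
    then show ?thesis using c by force
  next
    case False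
    have "av ((e - a) - c) \<le> nr Y c" using d False by (simp add: algebra_simps)
    then have "e - a \<in> EK M av Y" using EK_ball[OF gY c] by simp
    then show ?thesis using a by force
  qed
qed

lemma LBsum:
  assumes ind: "indep_var (Kborel av) X (Kborel av) Y" and gX: "good X" and gY: "good Y"
    and a: "a \<in> EK M av X" and c: "c \<in> EK M av Y" and le: "nr Y c \<le> nr X a"
  shows "nr X a \<le> nr (\<lambda>\<omega>. X \<omega> + Y \<omega>) d"
proof (cases "nr X a = 0")
  case True then show ?thesis using nr_nonneg[OF good_add[OF gX gY]] by simp
next
  case False
  then have rX: "0 < nr X a" using nr_nonneg[OF gX, of a] by linarith
  have rmin: "\<And>u. nr X a \<le> nr X u" using a unfolding EK_char[OF gX] by auto
  have p1: "0 < prob (Y -` UNIV \<inter> space M)" by (simp add: prob_space)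
  have U: "UNIV \<in> sets (Kborel av)" by (metis sets.top space_Kborel)
  obtain g where g: "0 < prob (Y -` (UNIV \<inter> {y. av (y - g) < nr X a}) \<inter> space M)"
    using class_event[OF gY U p1 nr_AE[OF gY, of c] rX] by blast
  show ?thesis
    by (rule sumLB[OF ind gX gY rmin rX _ g]) (auto intro: sets.Int U)
qed

lemma partB2:
  assumes ind: "indep_var (Kborel av) X (Kborel av) Y" and gX: "good X" and gY: "good Y"
  shows "{a + c | a c. a \<in> EK M av X \<and> c \<in> EK M av Y} \<subseteq> EK M av (\<lambda>\<omega>. X \<omega> + Y \<omega>)"
proof
  fix e assume "e \<in> {a + c | a c. a \<in> EK M av X \<and> c \<in> EK M av Y}"
  then obtain a c where ac: "a \<in> EK M av X" "c \<in> EK M av Y" "e = a + c" by blast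
  have gS: "good (\<lambda>\<omega>. X \<omega> + Y \<omega>)" by (rule good_add[OF gX gY])
  have lb: "max (nr X a) (nr Y c) \<le> nr (\<lambda>\<omega>. X \<omega> + Y \<omega>) d" for d
  proof (cases "nr Y c \<le> nr X a")
    case True
    then show ?thesis using LBsum[OF ind gX gY ac(1) ac(2) True] by simp
  next
    case False
    have "nr Y c \<le> nr (\<lambda>\<omega>. Y \<omega> + X \<omega>) d"
      using LBsum[OF indep_sym[OF ind] gY gX ac(2) ac(1)] False by simp
    moreover have "(\<lambda>\<omega>. Y \<omega> + X \<omega>) = (\<lambda>\<omega>. X \<omega> + Y \<omega>)" by (simp add: add.commute)
    ultimately show ?thesis using False by simp
  qed
  show "e \<in> EK M av (\<lambda>\<omega>. X \<omega> + Y \<omega>)" unfolding EK_char[OF gS]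
    using nr_sum_le[OF gX gY, of a c] lb ac(3) by (auto intro: order_trans)
qed

end


context pnf begin

lemma centers: assumes g: "good X" shows "\<exists>a\<in>EK M av X. a = 0 \<or> nr X a < av a"
proof -
  obtain a0 where a0: "a0 \<in> EK M av X" using EK_nonempty[OF g] by blast
  show ?thesis
  proof (cases "av a0 \<le> nr X a0")
    case True
    then have "0 \<in> EK M av X" using EK_ball[OF g a0, of 0] by simp
    then show ?thesis by blast
  next
    case False
    then show ?thesis using a0 by (intro bexI[of _ a0]) auto
  qed
qed

lemma LB1:
  assumes ind: "indep_var (Kborel av) X (Kborel av) Y" and gX: "good X" and gY: "good Y"
    and a: "a \<in> EK M av X" and c: "c \<in> EK M av Y" and cbig: "nr Y c < av c"
  shows "av c * nr X a \<le> nr (\<lambda>\<omega>. X \<omega> * Y \<omega>) d"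
proof (cases "nr X a = 0")
  case True then show ?thesis using nr_nonneg[OF good_mult[OF gX gY], of d] by simp
next
  case False
  define rX where "rX = nr X a"
  define rY where "rY = nr Y c"
  have rX: "0 < rX" using False nr_nonneg[OF gX, of a] unfolding rX_def by linarith
  have rY: "0 \<le> rY" unfolding rY_def by (rule nr_nonneg[OF gY])
  have rmin: "\<And>u. rX \<le> nr X u" using a unfolding EK_char[OF gX] rX_def by auto
  define K where "K = max (av a) rX"
  have K: "0 < K" "rX \<le> K" unfolding K_def using rX by auto
  have KX: "AE \<omega> in M. av (X \<omega>) \<le> K"
    using nr_AE[OF gX, of a]
  proof (rule eventually_mono)
    fix \<omega> assume "av (X \<omega> - a) \<le> nr X a"
    moreover have "av (X \<omega>) \<le> max (av (X \<omega> - a)) (av a)" using av_add[of "X \<omega> - a" a] by simp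
    ultimately show "av (X \<omega>) \<le> K" unfolding K_def rX_def by linarith
  qed
  define \<rho> where "\<rho> = av c * rX"
  have cpos: "0 < av c" using cbig rY unfolding rY_def by linarith
  have rho: "0 < \<rho>" unfolding \<rho>_def using cpos rX by simp
  define \<eta> where "\<eta> = \<rho> / K"
  have eta: "0 < \<eta>" unfolding \<eta>_def using rho K by simp
  have etac: "\<eta> \<le> av c"
  proof -
    have "\<rho> \<le> av c * K" unfolding \<rho>_def using K cpos by simp
    then show ?thesis unfolding \<eta>_def by (simp add: pos_divide_le_eq[OF K(1)])
  qed
  have Keta: "K * \<eta> = \<rho>" unfolding \<eta>_def using K by simp
  have U: "UNIV \<in> sets (Kborel av)" by (metis sets.top space_Kborel)
  have p1: "0 < prob (Y -` UNIV \<inter> space M)" by (simp add: prob_space)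
  obtain g where g: "0 < prob (Y -` (UNIV \<inter> {y. av (y - g) < \<eta>}) \<inter> space M)"
    using class_event[OF gY U p1 nr_AE[OF gY, of c] eta] by blast
  have Sset: "UNIV \<inter> {y. av (y - g) < \<eta>} \<in> sets (Kborel av)" by (intro sets.Int U ball_Kborel)
  obtain \<omega> where w: "\<omega> \<in> Y -` (UNIV \<inter> {y. av (y - g) < \<eta>}) \<inter> space M" "av (Y \<omega> - c) \<le> nr Y c"
    by (rule bexE[OF witness[OF measurable_sets[OF good_meas[OF gY] Sset] g nr_AE[OF gY, of c]]])
  have "av (g - c) \<le> max (av (g - Y \<omega>)) (av (Y \<omega> - c))" by (rule av_tri)
  moreover have "av (g - Y \<omega>) < av c"
  proof -
    have "av (Y \<omega> - g) < \<eta>" using w(1) by simp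
    then show ?thesis using etac av_commute[of g "Y \<omega>"] by linarith
  qed
  moreover have "av (Y \<omega> - c) < av c" using w(2) cbig by linarith
  ultimately have gc: "av (g - c) < av c" by linarith
  have "av (c + (g - c)) = av c" using gc by (rule av_strict)
  then have avg: "av g = av c" by simp
  show ?thesis
  proof -
    have "\<rho> \<le> nr (\<lambda>\<omega>. X \<omega> * Y \<omega>) d"
    proof (rule prodLB[OF ind gX gY rmin rX KX K(1) Sset g])
      show "\<And>y. y \<in> UNIV \<inter> {y. av (y - g) < \<eta>} \<Longrightarrow> av (y - g) < \<eta>" by simp
      show "K * \<eta> \<le> \<rho>" using Keta by simp
      show "\<rho> \<le> av g * rX" using avg unfolding \<rho>_def by simp
      show "0 < \<rho>" by (rule rho)
    qed
    then show ?thesis unfolding \<rho>_def rX_def .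
  qed
qed

lemma LB3:
  assumes ind: "indep_var (Kborel av) X (Kborel av) Y" and gX: "good X" and gY: "good Y"
    and a: "0 \<in> EK M av X" and c: "0 \<in> EK M av Y"
  shows "nr X 0 * nr Y 0 \<le> nr (\<lambda>\<omega>. X \<omega> * Y \<omega>) d"
proof (cases "nr X 0 = 0 \<or> nr Y 0 = 0")
  case True
  have "nr X 0 * nr Y 0 = 0" using True by (metis mult_zero_left mult_zero_right)
  moreover have "0 \<le> nr (\<lambda>\<omega>. X \<omega> * Y \<omega>) d" by (rule nr_nonneg[OF good_mult[OF gX gY]])
  ultimately show ?thesis by linarith
next
  case False
  define rX where "rX = nr X 0"
  define rY where "rY = nr Y 0"
  have rX: "0 < rX" using False nr_nonneg[OF gX, of 0] unfolding rX_def by linarith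
  have rY: "0 < rY" using False nr_nonneg[OF gY, of 0] unfolding rY_def by linarith
  have rmin: "\<And>u. rX \<le> nr X u" using a unfolding EK_char[OF gX] rX_def by auto
  have KX: "AE \<omega> in M. av (X \<omega>) \<le> rX" using nr_AE[OF gX, of 0] unfolding rX_def by simp
  define S0 where "S0 = {y. rY \<le> av (y - 0)}"
  have S0: "S0 \<in> sets (Kborel av)" unfolding S0_def by (rule coball_Kborel)
  have p0: "0 < prob (Y -` S0 \<inter> space M)" unfolding S0_def
    by (rule coball_event_pos[OF gY rY]) (simp add: rY_def)
  obtain g where g: "0 < prob (Y -` (S0 \<inter> {y. av (y - g) < rY}) \<inter> space M)"
    using class_event[OF gY S0 p0 nr_AE[OF gY, of 0] rY] by blast
  have Sset: "S0 \<inter> {y. av (y - g) < rY} \<in> sets (Kborel av)" by (intro sets.Int S0 ball_Kborel)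
  obtain \<omega> where w: "\<omega> \<in> Y -` (S0 \<inter> {y. av (y - g) < rY}) \<inter> space M" "\<omega> \<in> space M"
    by (rule bexE[OF witness[OF measurable_sets[OF good_meas[OF gY] Sset] g AE_space]])
  have w1: "rY \<le> av (Y \<omega>)" and w2: "av (Y \<omega> - g) < rY" using w(1) unfolding S0_def by auto
  have "av (Y \<omega> + (g - Y \<omega>)) = av (Y \<omega>)" using w1 w2 av_commute[of g "Y \<omega>"] by (intro av_strict) linarith
  then have avg: "rY \<le> av g" using w1 by simp
  have "rX * rY \<le> nr (\<lambda>\<omega>. X \<omega> * Y \<omega>) d"
  proof (rule prodLB[OF ind gX gY rmin rX KX rX Sset g])
    show "\<And>y. y \<in> S0 \<inter> {y. av (y - g) < rY} \<Longrightarrow> av (y - g) < rY" by simp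
    show "rX * rY \<le> rX * rY" by simp
    show "rX * rY \<le> av g * rX" using avg rX by (simp add: mult.commute)
    show "0 < rX * rY" using rX rY by simp
  qed
  then show ?thesis unfolding rX_def rY_def .
qed

end


context pnf begin

lemma av_add_le: "av u \<le> r \<Longrightarrow> av v \<le> r \<Longrightarrow> av (u + v) \<le> r"
  using av_add[of u v] by linarith

lemma prod_bound:
  assumes "av x' \<le> rX" "av y' \<le> rY" "0 \<le> rX" "0 \<le> rY"
  shows "av (a * y' + c * x' + x' * y') \<le> max (av a * rY) (max (av c * rX) (rX * rY))"
proof -
  have 1: "av (a * y') \<le> max (av a * rY) (max (av c * rX) (rX * rY))"
  proof -
    have "av a * av y' \<le> av a * rY" using assms by (intro mult_left_mono) auto
    then show ?thesis by (simp add: av_mult)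
  qed
  have 2: "av (c * x') \<le> max (av a * rY) (max (av c * rX) (rX * rY))"
  proof -
    have "av c * av x' \<le> av c * rX" using assms by (intro mult_left_mono) auto
    then show ?thesis by (simp add: av_mult)
  qed
  have 3: "av (x' * y') \<le> max (av a * rY) (max (av c * rX) (rX * rY))"
  proof -
    have "av x' * av y' \<le> rX * rY" using assms by (intro mult_mono) auto
    then show ?thesis by (simp add: av_mult)
  qed
  show ?thesis by (intro av_add_le 1 2 3)
qed

lemma partC:
  assumes ind: "indep_var (Kborel av) X (Kborel av) Y" and gX: "good X" and gY: "good Y"
  shows "EK M av (\<lambda>\<omega>. X \<omega> * Y \<omega>) = {a * c | a c. a \<in> EK M av X \<and> c \<in> EK M av Y}"
proof -
  obtain a where a: "a \<in> EK M av X" "a = 0 \<or> nr X a < av a" using centers[OF gX] by blast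
  obtain c where c: "c \<in> EK M av Y" "c = 0 \<or> nr Y c < av c" using centers[OF gY] by blast
  define rX where "rX = nr X a"
  define rY where "rY = nr Y c"
  have rX0: "0 \<le> rX" unfolding rX_def by (rule nr_nonneg[OF gX])
  have rY0: "0 \<le> rY" unfolding rY_def by (rule nr_nonneg[OF gY])
  define \<rho> where "\<rho> = max (av a * rY) (max (av c * rX) (rX * rY))"
  define P where "P = (\<lambda>\<omega>. X \<omega> * Y \<omega>)"
  have gP: "good P" unfolding P_def by (rule good_mult[OF gX gY])
  have ballX: "\<And>a'. a' \<in> EK M av X \<longleftrightarrow> av (a' - a) \<le> rX" unfolding rX_def by (rule EK_ball[OF gX a(1)])
  have ballY: "\<And>c'. c' \<in> EK M av Y \<longleftrightarrow> av (c' - c) \<le> rY" unfolding rY_def by (rule EK_ball[OF gY c(1)])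
  have up: "nr P (a * c) \<le> \<rho>"
  proof (rule nr_le[OF gP])
    show "AE \<omega> in M. av (P \<omega> - a * c) \<le> \<rho>"
      using nr_AE[OF gX, of a] nr_AE[OF gY, of c]
    proof eventually_elim
      case (elim \<omega>)
      have "P \<omega> - a * c = a * (Y \<omega> - c) + c * (X \<omega> - a) + (X \<omega> - a) * (Y \<omega> - c)"
        unfolding P_def by (simp add: algebra_simps)
      then show ?case unfolding \<rho>_def using prod_bound[of "X \<omega> - a" rX "Y \<omega> - c" rY a c] elim rX0 rY0
        unfolding rX_def rY_def by simp
    qed
  qed
  have t1: "av a * rY \<le> nr P d" for d
  proof (cases "a = 0")
    case True then show ?thesis using nr_nonneg[OF gP, of d] by simp
  next
    case False
    then have "nr X a < av a" using a(2) by simp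
    then have "av a * nr Y c \<le> nr (\<lambda>\<omega>. Y \<omega> * X \<omega>) d"
      by (rule LB1[OF indep_sym[OF ind] gY gX c(1) a(1)])
    moreover have "(\<lambda>\<omega>. Y \<omega> * X \<omega>) = P" unfolding P_def by (simp add: mult.commute)
    ultimately show ?thesis unfolding rY_def by simp
  qed
  have t2: "av c * rX \<le> nr P d" for d
  proof (cases "c = 0")
    case True then show ?thesis using nr_nonneg[OF gP, of d] by simp
  next
    case False
    then have "nr Y c < av c" using c(2) by simp
    then have "av c * nr X a \<le> nr (\<lambda>\<omega>. X \<omega> * Y \<omega>) d"
      by (rule LB1[OF ind gX gY a(1) c(1)])
    then show ?thesis unfolding rX_def P_def by simp
  qed
  have t3: "rX * rY \<le> nr P d" for d
  proof (cases "a = 0")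
    case False
    then have "rX < av a" using a(2) unfolding rX_def by simp
    then have "rX * rY \<le> av a * rY" using rY0 by (intro mult_right_mono) auto
    then show ?thesis using t1[of d] by linarith
  next
    case a0: True
    show ?thesis
    proof (cases "c = 0")
      case False
      then have "rY < av c" using c(2) unfolding rY_def by simp
      then have "rX * rY \<le> rX * av c" using rX0 by (intro mult_left_mono) auto
      then show ?thesis using t2[of d] by (simp add: mult.commute)
    next
      case c0: True
      have "nr X 0 * nr Y 0 \<le> nr (\<lambda>\<omega>. X \<omega> * Y \<omega>) d"
        using LB3[OF ind gX gY] a(1) c(1) a0 c0 by simp
      then show ?thesis unfolding rX_def rY_def P_def using a0 c0 by simp
    qed
  qed
  have lb: "\<rho> \<le> nr P d" for d unfolding \<rho>_def using t1[of d] t2[of d] t3[of d] by simp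
  have nrac: "nr P (a * c) = \<rho>" using up lb[of "a * c"] by simp
  have acE: "a * c \<in> EK M av P" unfolding EK_char[OF gP] using up lb by (auto intro: order_trans)
  have ball: "\<And>e. e \<in> EK M av P \<longleftrightarrow> av (e - a * c) \<le> \<rho>" using EK_ball[OF gP acE] nrac by simp
  have "EK M av P = {a * c | a c. a \<in> EK M av X \<and> c \<in> EK M av Y}"
  proof (intro equalityI subsetI)
    fix e assume "e \<in> {a * c | a c. a \<in> EK M av X \<and> c \<in> EK M av Y}"
    then obtain a' c' where ac': "a' \<in> EK M av X" "c' \<in> EK M av Y" "e = a' * c'" by blast
    have "e - a * c = a * (c' - c) + c * (a' - a) + (a' - a) * (c' - c)"
      unfolding ac'(3) by (simp add: algebra_simps)
    then have "av (e - a * c) \<le> \<rho>" unfolding \<rho>_def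
      using prod_bound[of "a' - a" rX "c' - c" rY a c] ac'(1,2) ballX ballY rX0 rY0 by simp
    then show "e \<in> EK M av P" using ball by simp
  next
    fix e assume "e \<in> EK M av P"
    then have e: "av (e - a * c) \<le> \<rho>" using ball by simp
    have case1: "e \<in> {a * c | a c. a \<in> EK M av X \<and> c \<in> EK M av Y}" if a0: "a \<noteq> 0" and r: "\<rho> = av a * rY"
    proof -
      define c' where "c' = c + (e - a * c) / a"
      have "a * c' = e" unfolding c'_def using a0 by (simp add: field_simps)
      moreover have "c' \<in> EK M av Y"
      proof -
        have "av (c' - c) = av (e - a * c) / av a" unfolding c'_def by (simp add: av_divide)
        also have "\<dots> \<le> rY" using e r av_pos[OF a0] by (simp add: pos_divide_le_eq mult.commute)
        finally show ?thesis using ballY by simp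
      qed
      ultimately show ?thesis using a(1) by blast
    qed
    have case2: "e \<in> {a * c | a c. a \<in> EK M av X \<and> c \<in> EK M av Y}" if c0: "c \<noteq> 0" and r: "\<rho> = av c * rX"
    proof -
      define a' where "a' = a + (e - a * c) / c"
      have "a' * c = e" unfolding a'_def using c0 by (simp add: field_simps)
      moreover have "a' \<in> EK M av X"
      proof -
        have "av (a' - a) = av (e - a * c) / av c" unfolding a'_def by (simp add: av_divide)
        also have "\<dots> \<le> rX" using e r av_pos[OF c0] by (simp add: pos_divide_le_eq mult.commute)
        finally show ?thesis using ballX by simp
      qed
      ultimately show ?thesis using c(1) by blast
    qed
    have case3: "e \<in> {a * c | a c. a \<in> EK M av X \<and> c \<in> EK M av Y}" if a0: "a = 0" and c0: "c = 0"
    proof (cases "e = 0")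
      case True
      then show ?thesis using a(1) c(1) a0 c0 by force
    next
      case False
      have r: "\<rho> = rX * rY" unfolding \<rho>_def using a0 c0 rX0 rY0 by simp
      have "0 < av e" using av_pos[OF False] .
      then have "0 < rX * rY" using e r a0 c0 by simp
      then have rXp: "0 < rX" using rX0 rY0 by (simp add: zero_less_mult_iff)
      then have "rX \<in> range av" using nr_in_range[OF gX] unfolding rX_def by simp
      then obtain x0 where x0: "av x0 = rX" by auto
      have x00: "x0 \<noteq> 0" using x0 rXp by auto
      have "x0 \<in> EK M av X" using ballX x0 a0 by simp
      moreover have "e / x0 \<in> EK M av Y"
      proof -
        have "av (e / x0 - c) = av e / rX" using c0 x0 by (simp add: av_divide)
        also have "\<dots> \<le> rY" using e r a0 c0 rXp by (simp add: pos_divide_le_eq mult.commute)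
        finally show ?thesis using ballY by simp
      qed
      moreover have "e = x0 * (e / x0)" using x00 by simp
      ultimately show ?thesis by blast
    qed
    show "e \<in> {a * c | a c. a \<in> EK M av X \<and> c \<in> EK M av Y}"
    proof (cases "a = 0")
      case False
      then have "rX < av a" using a(2) unfolding rX_def by simp
      then have ge: "rX * rY \<le> av a * rY" using rY0 by (intro mult_right_mono) auto
      show ?thesis
      proof (cases "av c * rX \<le> av a * rY")
        case True
        then have "\<rho> = av a * rY" unfolding \<rho>_def using ge by simp
        then show ?thesis using case1 False by simp
      next
        case nle: False
        then have "\<rho> = av c * rX" unfolding \<rho>_def using ge by simp
        moreover have "c \<noteq> 0" using nle av_nonneg[of a] rY0 by (metis av_0 mult_nonneg_nonneg mult_zero_left)
        ultimately show ?thesis using case2 by simp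
      qed
    next
      case a0: True
      show ?thesis
      proof (cases "c = 0")
        case True then show ?thesis using case3 a0 by simp
      next
        case False
        then have "rY < av c" using c(2) unfolding rY_def by simp
        then have "rX * rY \<le> av c * rX" using rX0 by (simp add: mult.commute mult_left_mono)
        then have "\<rho> = av c * rX" unfolding \<rho>_def using a0 rY0 rX0 by simp
        then show ?thesis using case2 False by simp
      qed
    qed
  qed
  then show ?thesis unfolding P_def .
qed

lemma Linf_good: assumes "X \<in> Linf M av" shows "good X"
proof -
  have m: "X \<in> M \<rightarrow>\<^sub>M Kborel av" and f: "norm_inf M av X < \<infinity>" using assms unfolding Linf_def by auto
  have "AE \<omega> in M. ereal (av (X \<omega>)) \<le> norm_inf M av X" unfolding norm_inf_def by (rule esssup_AE)
  then have "AE \<omega> in M. av (X \<omega>) \<le> real_of_ereal (norm_inf M av X)"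
  proof (rule eventually_mono)
    fix \<omega> assume "ereal (av (X \<omega>)) \<le> norm_inf M av X"
    then show "av (X \<omega>) \<le> real_of_ereal (norm_inf M av X)" using f by (cases "norm_inf M av X") auto
  qed
  then show ?thesis unfolding good_def using m by blast
qed

end

theorem mainTheorem2:
  fixes M :: "'a measure" and av :: "'k::field \<Rightarrow> real"
    and X Y :: "'a \<Rightarrow> 'k" and k b :: 'k
  assumes "prob_space M" and "nonarch_local_field av"
    and "X \<in> Linf M av" and "Y \<in> Linf M av"
  shows "EK M av (\<lambda>\<omega>. k * X \<omega> + b) = (\<lambda>a. k * a + b) ` EK M av X
    \<and> EK M av (\<lambda>\<omega>. X \<omega> + Y \<omega>) \<subseteq> {a + c | a c. a \<in> EK M av X \<and> c \<in> EK M av Y}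
    \<and> (prob_space.indep_var M (Kborel av) X (Kborel av) Y \<longrightarrow>
           EK M av (\<lambda>\<omega>. X \<omega> + Y \<omega>) = {a + c | a c. a \<in> EK M av X \<and> c \<in> EK M av Y})
    \<and> (prob_space.indep_var M (Kborel av) X (Kborel av) Y \<longrightarrow>
           EK M av (\<lambda>\<omega>. X \<omega> * Y \<omega>) = {a * c | a c. a \<in> EK M av X \<and> c \<in> EK M av Y})"
proof -
  interpret pnf M av by (intro pnf.intro assms(1) nf.intro assms(2))
  have gX: "good X" by (rule Linf_good[OF assms(3)])
  have gY: "good Y" by (rule Linf_good[OF assms(4)])
  show ?thesis
    using partA[OF gX] partB1[OF gX gY] partB2[OF _ gX gY] partC[OF _ gX gY] by blast
qed


end
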